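(* Let $G$, $k\ge 3$, the choice strings $c_{i,j}$ ($1\le i<j\le k$), the template string $t$, $L$ and $d$ be as in the binary construction described in the context. If $G$ has a clique of size $k$, then there is a string $s\in\{0,1\}^L$ such that every choice string $c_{i,j}$ has a substring $s_{i,j}$ of length $L$ with $d_H(s,s_{i,j})\le d$, and $d_H(s,t)\le d$.
   Context: Let $G=(V,E)$ be an undirected simple graph with $V=\{v_1,\dots,v_n\}$ and edge set $E=\{e_1,\dots,e_m\}$, and let $k\ge 3$ be an integer; put $N=\binom{k}{2}$ and $b=nk-2k+2$. All strings are over $\{0,1\}$. For $1\le p\le n$ let $\mathrm{number}(p)=0^{p-1}10^{n-p}$. Let $\mathrm{front\_tag}=(1^{3nk}0)^{nk}$ (length $(3nk+1)nk$). Order the pairs $(i,j)$, $1\le i<j\le k$, lexicographically and let $i'$ be the position of $(i,j)$ in this order. For an edge $e$ joining $v_r,v_s$ with $r<s$ let $\mathrm{encode}(i,j,e)=(0^n)^{i-1}\,\mathrm{number}(r)\,(0^n)^{j-i-1}\,\mathrm{number}(s)\,(0^n)^{k-j}$ (length $nk$; its $k$ consecutive length-$n$ pieces are called sections), $\mathrm{back\_tag}(i')=0^{(i'-1)b}1^{b}0^{(N-i')b}$, and $\mathrm{block}(i,j,e)=\mathrm{front\_tag}\,\mathrm{encode}(i,j,e)\,\mathrm{back\_tag}(i')$. The choice string is $c_{i,j}=\mathrm{block}(i,j,e_1)\mathrm{block}(i,j,e_2)\cdots\mathrm{block}(i,j,e_m)$. The template string is $t=\mathrm{front\_tag}\,1^{nk}\,0^{Nb}$.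 Set $L=(3nk+1)nk+nk+Nb$ and $d=nk-k$. $d_H$ denotes Hamming distance. *)

theory Defs
  imports Main "HOL-Library.Sublist"
begin

text \<open>Binary strings are bool lists (True = 1, False = 0).
 Graph: vertices v_1..v_n are the numbers 1..n; the edge list E = [e_1,...,e_m]
 lists each edge {v_r,v_s} once as the pair (r,s) with r < s.\<close>

definition zeros :: "nat \<Rightarrow> bool list" where
  "zeros l = replicate l False"

definition number :: "nat \<Rightarrow> nat \<Rightarrow> bool list" where
  "number n p = zeros (p - 1) @ [True] @ zeros (n - p)"

definition front_tag :: "nat \<Rightarrow> nat \<Rightarrow> bool list" where
  "front_tag n k = concat (replicate (n * k) (replicate (3 * n * k) True @ [False]))"

definition bpar :: "nat \<Rightarrow> nat \<Rightarrow> nat" where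
  "bpar n k = n * k - 2 * k + 2"

definition Npairs :: "nat \<Rightarrow> nat" where
  "Npairs k = k choose 2"

definition pair_list :: "nat \<Rightarrow> (nat \<times> nat) list" where
  "pair_list k = concat (map (\<lambda>i. map (\<lambda>j. (i, j)) [i+1..<k+1]) [1..<k+1])"

definition pair_pos :: "nat \<Rightarrow> nat \<Rightarrow> nat \<Rightarrow> nat" where
  "pair_pos k i j = length (takeWhile (\<lambda>q. q \<noteq> (i, j)) (pair_list k)) + 1"

definition encode :: "nat \<Rightarrow> nat \<Rightarrow> nat \<Rightarrow> nat \<Rightarrow> nat \<times> nat \<Rightarrow> bool list" where
  "encode n k i j e = (case e of (r, s) \<Rightarrow>
     concat (replicate (i - 1) (zeros n)) @ number n r @
     concat (replicate (j - i - 1) (zeros n)) @ number n s @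
     concat (replicate (k - j) (zeros n)))"

definition back_tag :: "nat \<Rightarrow> nat \<Rightarrow> nat \<Rightarrow> bool list" where
  "back_tag n k ip = zeros ((ip - 1) * bpar n k) @ replicate (bpar n k) True
                     @ zeros ((Npairs k - ip) * bpar n k)"

definition block :: "nat \<Rightarrow> nat \<Rightarrow> nat \<Rightarrow> nat \<Rightarrow> nat \<times> nat \<Rightarrow> bool list" where
  "block n k i j e = front_tag n k @ encode n k i j e @ back_tag n k (pair_pos k i j)"

definition choice_string :: "nat \<Rightarrow> nat \<Rightarrow> (nat \<times> nat) list \<Rightarrow> nat \<Rightarrow> nat \<Rightarrow> bool list" where
  "choice_string n k E i j = concat (map (block n k i j) E)"

definition template :: "nat \<Rightarrow> nat \<Rightarrow> bool list" where
  "template n k = front_tag n k @ replicate (n * k) True @ zeros (Npairs k * bpar n k)"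

definition Lpar :: "nat \<Rightarrow> nat \<Rightarrow> nat" where
  "Lpar n k = (3 * n * k + 1) * n * k + n * k + Npairs k * bpar n k"

definition dpar :: "nat \<Rightarrow> nat \<Rightarrow> nat" where
  "dpar n k = n * k - k"

text \<open>Hamming distance (used only for strings of equal length).\<close>
definition hamming :: "bool list \<Rightarrow> bool list \<Rightarrow> nat" where
  "hamming xs ys = card {p. p < length xs \<and> p < length ys \<and> xs ! p \<noteq> ys ! p}"

definition adjacent :: "(nat \<times> nat) list \<Rightarrow> nat \<Rightarrow> nat \<Rightarrow> bool" where
  "adjacent E u v = ((u, v) \<in> set E \<or> (v, u) \<in> set E)"

definition has_clique :: "nat \<Rightarrow> (nat \<times> nat) list \<Rightarrow> nat \<Rightarrow> bool" where
  "has_clique n E k = (\<exists>K. K \<subseteq> {1..n} \<and> card K = k \<and>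
      (\<forall>u\<in>K. \<forall>v\<in>K. u \<noteq> v \<longrightarrow> adjacent E u v))"

end

theory Submission
  imports Defs
begin


definition hc :: "bool list \<Rightarrow> bool list \<Rightarrow> nat" where
  "hc xs ys = length (filter (\<lambda>(a,b). a \<noteq> b) (zip xs ys))"

lemma hamming_hc: "length xs = length ys \<Longrightarrow> hamming xs ys = hc xs ys"
proof (induction xs ys rule: list_induct2)
  case Nil then show ?case by (simp add: hamming_def hc_def)
next
  case (Cons x xs y ys)
  let ?B = "{p. p < length xs \<and> p < length ys \<and> xs ! p \<noteq> ys ! p}"
  have eq: "{p. p < length (x#xs) \<and> p < length (y#ys) \<and> (x#xs) ! p \<noteq> (y#ys) ! p}
      = {p::nat. p = 0 \<and> x \<noteq> y} \<union> Suc ` ?B"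
  proof (rule set_eqI)
    fix p show "p \<in> {p. p < length (x#xs) \<and> p < length (y#ys) \<and> (x#xs) ! p \<noteq> (y#ys) ! p}
      \<longleftrightarrow> p \<in> {p::nat. p = 0 \<and> x \<noteq> y} \<union> Suc ` ?B"
      by (cases p) auto
  qed
  have c1: "card {p::nat. p = 0 \<and> x \<noteq> y} = (if x \<noteq> y then 1 else 0)" by simp
  have "card ({p::nat. p = 0 \<and> x \<noteq> y} \<union> Suc ` ?B) = card {p::nat. p = 0 \<and> x \<noteq> y} + card (Suc ` ?B)"
    by (subst card_Un_disjoint) (auto simp: finite_nat_set_iff_bounded)
  also have "card (Suc ` ?B) = card ?B" by (simp add: card_image)
  finally have "hamming (x#xs) (y#ys) = (if x \<noteq> y then 1 else 0) + hamming xs ys"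
    unfolding hamming_def eq c1 .
  then show ?case using Cons by (simp add: hc_def)
qed

lemma ham_app: "length a = length c \<Longrightarrow> length b = length d \<Longrightarrow>
   hamming (a @ b) (c @ d) = hamming a c + hamming b d"
  by (simp add: hamming_hc hc_def)

lemma ham_self: "hamming xs xs = 0"
  by (induction xs) (simp_all add: hamming_hc hc_def)

lemma ham_rep: "hamming (replicate m a) (replicate m b) = (if a = b then 0 else m)"
  by (induction m) (auto simp: hamming_hc hc_def)

lemma rep_split: "1 \<le> p \<Longrightarrow> p \<le> n \<Longrightarrow> replicate n c = replicate (p-1) c @ [c] @ replicate (n-p) c"
proof -
  assume a: "1 \<le> p" "p \<le> n"
  have e: "n = p - 1 + Suc (n-p)" using a by simp
  have "replicate (p - 1 + Suc (n-p)) c = replicate (p-1) c @ replicate (Suc (n-p)) c" by (simp only: replicate_add)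
  also have "\<dots> = replicate (p-1) c @ [c] @ replicate (n-p) c" by simp
  finally show ?thesis using e by metis
qed

lemma len_number: "1 \<le> p \<Longrightarrow> p \<le> n \<Longrightarrow> length (number n p) = n"
  by (simp add: number_def zeros_def)

lemma ham_number_zeros: "1 \<le> p \<Longrightarrow> p \<le> n \<Longrightarrow> hamming (number n p) (zeros n) = 1"
  unfolding number_def zeros_def
  by (subst rep_split[of p n], simp_all add: ham_app ham_rep hamming_hc hc_def)

lemma ham_number_ones: "1 \<le> p \<Longrightarrow> p \<le> n \<Longrightarrow> hamming (number n p) (replicate n True) = n - 1"
  unfolding number_def zeros_def
  by (subst rep_split[of p n], simp_all add: ham_app ham_rep hamming_hc hc_def)

lemma ham_concat: "(\<forall>l\<in>set L. length (f l) = length (g l)) \<Longrightarrow>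
  hamming (concat (map f L)) (concat (map g L)) = (\<Sum>l\<leftarrow>L. hamming (f l) (g l))"
proof (induction L)
  case Nil then show ?case by (simp add: hamming_def)
next
  case (Cons a L)
  have "length (concat (map f L)) = length (concat (map g L))"
    using Cons.prems by (simp add: length_concat cong: map_cong)
  then show ?case using Cons by (simp add: ham_app)
qed



lemma concat_rep_rep: "concat (replicate m (replicate n a)) = replicate (m*n) a"
  by (induction m) (simp_all add: replicate_add)

lemma takeWhile_len: "x \<in> set xs \<Longrightarrow> length (takeWhile (\<lambda>q. q \<noteq> x) xs) < length xs"
  by (induction xs) auto

lemma sum_aux: "sum (\<lambda>i. k - i) {1..<k+1} = k choose 2"
proof (induction k)
  case 0 then show ?case by simp
next
  case (Suc k)
  have "sum (\<lambda>i. Suc k - i) {1..<Suc k+1} = sum (\<lambda>i. Suc k - i) {1..<k+1} + (Suc k - Suc k)"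
  proof -
    have "{1..<Suc k+1} = insert (Suc k) {1..<k+1}" by auto
    then show ?thesis by simp
  qed
  also have "\<dots> = sum (\<lambda>i. (k - i) + 1) {1..<k+1}"
  proof -
    have "sum (\<lambda>i. Suc k - i) {1..<k+1} = sum (\<lambda>i. (k-i)+1) {1..<k+1}" by (rule sum.cong) auto
    then show ?thesis by simp
  qed
  also have "\<dots> = (k choose 2) + k" unfolding sum.distrib Suc.IH by simp
  also have "\<dots> = Suc k choose 2" 
  proof -
    have "Suc k choose 2 = (k choose 1) + (k choose 2)"
      using binomial_Suc_Suc[of k 1] by (simp only: Suc_1)
    moreover have "k choose 1 = k" by simp
    ultimately show ?thesis by linarith
  qed
  finally show ?case .
qed

lemma len_pair_list: "length (pair_list k) = Npairs k"
proof -
  have "length (pair_list k) = sum_list (map (\<lambda>i. k - i) [1..<k+1])"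
    unfolding pair_list_def length_concat map_map
    by (rule arg_cong[where f=sum_list], rule map_cong) auto
  also have "\<dots> = sum (\<lambda>i. k - i) {1..<k+1}"
    by (metis sum_set_upt_conv_sum_list_nat set_upt)
  finally show ?thesis using sum_aux Npairs_def by simp
qed

lemma pair_in: "1 \<le> i \<Longrightarrow> i < j \<Longrightarrow> j \<le> k \<Longrightarrow> (i,j) \<in> set (pair_list k)"
proof -
  assume a: "1 \<le> i" "i < j" "j \<le> k"
  let ?f = "\<lambda>i. map (\<lambda>j. (i,j)) [i+1..<k+1]"
  have "?f i \<in> set (map ?f [1..<k+1])" using a by (simp only: set_map set_upt) (rule imageI, simp)
  moreover have "(i,j) \<in> set (?f i)" using a by (simp only: set_map set_upt) (rule image_eqI[where x=j], auto)
  ultimately show ?thesis unfolding pair_list_def set_concat by blast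
qed

lemma pair_pos_le: "1 \<le> i \<Longrightarrow> i < j \<Longrightarrow> j \<le> k \<Longrightarrow> pair_pos k i j \<le> Npairs k"
  using takeWhile_len[OF pair_in] len_pair_list unfolding pair_pos_def
  by (metis Suc_eq_plus1 Suc_leI)

lemma upt_split: "1 \<le> i \<Longrightarrow> i < j \<Longrightarrow> j \<le> k \<Longrightarrow>
  [1..<k+1] = [1..<i] @ i # [i+1..<j] @ j # [j+1..<k+1]"
proof -
  assume a: "1 \<le> i" "i < j" "j \<le> k"
  have "[1..<k+1] = [1..<i] @ [i..<k+1]" using a upt_add_eq_append[of 1 i "k+1-i"] by simp
  moreover have "[i..<k+1] = i # [i+1..<k+1]" using a by (simp add: upt_conv_Cons)
  moreover have "[i+1..<k+1] = [i+1..<j] @ [j..<k+1]" using a upt_add_eq_append[of "i+1" j "k+1-j"] by simp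
  moreover have "[j..<k+1] = j # [j+1..<k+1]" using a by (simp add: upt_conv_Cons)
  ultimately show ?thesis by simp
qed



theorem proposition3:
  fixes n k :: nat and E :: "(nat \<times> nat) list"
  assumes "k \<ge> 3"
    and "distinct E"
    and "\<forall>(r, s) \<in> set E. 1 \<le> r \<and> r < s \<and> s \<le> n"
    and "has_clique n E k"
  shows "\<exists>s :: bool list. length s = Lpar n k \<and>
           (\<forall>i j. 1 \<le> i \<and> i < j \<and> j \<le> k \<longrightarrow>
              (\<exists>sij. sublist sij (choice_string n k E i j) \<and> length sij = Lpar n k \<and>
                     hamming s sij \<le> dpar n k)) \<and>
           hamming s (template n k) \<le> dpar n k"
proof -
  obtain K where K: "K \<subseteq> {1..n}" "card K = k" and adj: "\<forall>u\<in>K. \<forall>v\<in>K. u \<noteq> v \<longrightarrow> adjacent E u v"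
    using assms(4) unfolding has_clique_def by blast
  have fin: "finite K" using K(1) finite_subset by blast
  have kn: "k \<le> n" using card_mono[OF _ K(1)] K(2) by simp
  define ul where "ul = sorted_list_of_set K"
  have ul_len: "length ul = k" using K(2) fin by (simp add: ul_def)
  have ul_set: "set ul = K" using fin by (simp add: ul_def)
  have ul_sorted: "sorted_wrt (<) ul" unfolding ul_def by (rule strict_sorted_list_of_set)
  define u where "u l = ul ! (l - 1)" for l
  have uK: "u l \<in> K" if "1 \<le> l" "l \<le> k" for l
    using that ul_len ul_set unfolding u_def by (metis One_nat_def Suc_le_eq Suc_pred nth_mem le_trans less_Suc_eq_le)
  have ub: "1 \<le> u l \<and> u l \<le> n" if "1 \<le> l" "l \<le> k" for l
    using uK[OF that] K(1) by auto
  have ulless: "u i < u j" if "1 \<le> i" "i < j" "j \<le> k" for i j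
    unfolding u_def using sorted_wrt_nth_less[OF ul_sorted, of "i - 1" "j - 1"] that ul_len by simp
  have lenu: "length (number n (u l)) = n" if "1 \<le> l" "l \<le> k" for l
    using len_number ub[OF that] by blast
  have hu1: "hamming (number n (u l)) (replicate n True) = n - 1" if "1 \<le> l" "l \<le> k" for l
    using ham_number_ones ub[OF that] by blast
  have hu0: "hamming (number n (u l)) (zeros n) = 1" if "1 \<le> l" "l \<le> k" for l
    using ham_number_zeros ub[OF that] by blast
  define N where "N = Npairs k"
  define b where "b = bpar n k"
  define x where "x = concat (map (\<lambda>l. number n (u l)) [1..<k+1])"
  have xlen: "length x = k * n"
  proof -
    have "length x = sum_list (map (\<lambda>l. n) [1..<k+1])"
      unfolding x_def length_concat map_map
      by (rule arg_cong[where f=sum_list], rule map_cong) (auto simp: lenu)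
    then show ?thesis by (simp add: map_replicate_const sum_list_replicate)
  qed
  define s where "s = front_tag n k @ x @ zeros (N * b)"
  have ftlen: "length (front_tag n k) = (3 * n * k + 1) * n * k"
    unfolding front_tag_def by (simp add: length_concat map_replicate_const sum_list_replicate algebra_simps)
  have slen: "length s = Lpar n k"
    unfolding s_def Lpar_def N_def b_def using ftlen xlen by (simp add: zeros_def)
  have templ: "hamming s (template n k) \<le> dpar n k"
  proof -
    have r: "replicate (n*k) True = concat (map (\<lambda>l. replicate n True) [1..<k+1])"
      by (simp add: map_replicate_const concat_rep_rep mult.commute)
    have "hamming x (replicate (n*k) True) = (\<Sum>l\<leftarrow>[1..<k+1]. hamming (number n (u l)) (replicate n True))"
      unfolding x_def r by (rule ham_concat) (auto simp: lenu)
    also have "\<dots> = (\<Sum>l\<leftarrow>[1..<k+1]. n - 1)"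
      by (rule arg_cong[where f=sum_list], rule map_cong) (auto simp: hu1)
    also have "\<dots> = n * k - k" by (simp add: map_replicate_const sum_list_replicate algebra_simps)
    finally have hx: "hamming x (replicate (n*k) True) = n * k - k" .
    show ?thesis unfolding s_def template_def dpar_def N_def b_def
      using xlen hx by (simp add: ham_app ham_self mult.commute)
  qed
  have choice: "\<exists>sij. sublist sij (choice_string n k E i j) \<and> length sij = Lpar n k \<and>
                     hamming s sij \<le> dpar n k" if ij: "1 \<le> i" "i < j" "j \<le> k" for i j
  proof -
    have uij: "u i < u j" using ulless[OF ij] .
    have "adjacent E (u i) (u j)" using adj uK ij uij by simp
    then have eE: "(u i, u j) \<in> set E" using assms(3) uij unfolding adjacent_def by fastforce
    define sij where "sij = block n k i j (u i, u j)"
    have sub: "sublist sij (choice_string n k E i j)"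
    proof -
      obtain as bs where "E = as @ (u i, u j) # bs" using split_list[OF eE] by blast
      then show ?thesis unfolding choice_string_def sij_def sublist_def by auto
    qed
    define ip where "ip = pair_pos k i j"
    have ip: "1 \<le> ip" "ip \<le> N" using pair_pos_le[OF ij] unfolding ip_def N_def pair_pos_def by auto
    have ztag: "zeros (N * b) = zeros ((ip - 1) * b) @ replicate b False @ zeros ((N - ip) * b)"
    proof -
      have e: "N = (ip - 1) + 1 + (N - ip)" using ip by simp
      have "N * b = ((ip - 1) + 1 + (N - ip)) * b" using e by simp
      also have "\<dots> = (ip - 1) * b + b + (N - ip) * b" by (simp only: add_mult_distrib mult_1_left)
      finally have "N * b = (ip - 1) * b + b + (N - ip) * b" .
      then show ?thesis unfolding zeros_def by (simp only: replicate_add append_assoc)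
    qed
    have bt: "back_tag n k ip = zeros ((ip - 1) * b) @ replicate b True @ zeros ((N - ip) * b)"
      unfolding back_tag_def N_def b_def ..
    have hb: "hamming (zeros (N * b)) (back_tag n k ip) = b"
      unfolding ztag bt by (simp add: ham_app ham_self ham_rep zeros_def)
    define g where "g l = (if l = i then number n (u i) else if l = j then number n (u j) else zeros n)" for l
    have split: "[1..<k+1] = [1..<i] @ i # [i+1..<j] @ j # [j+1..<k+1]" using upt_split[OF ij] .
    have enc: "encode n k i j (u i, u j) = concat (map g [1..<k+1])"
    proof -
      have g1: "map g [1..<i] = replicate (i - 1) (zeros n)"
        using ij by (subst map_cong[OF refl, of _ g "\<lambda>_. zeros n"]) (auto simp: g_def map_replicate_const)
      have g2: "map g [i+1..<j] = replicate (j - i - 1) (zeros n)"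
        using ij by (subst map_cong[OF refl, of _ g "\<lambda>_. zeros n"]) (auto simp: g_def map_replicate_const)
      have g3: "map g [j+1..<k+1] = replicate (k - j) (zeros n)"
        using ij by (subst map_cong[OF refl, of _ g "\<lambda>_. zeros n"]) (auto simp: g_def map_replicate_const)
      have gi: "g i = number n (u i)" and gj: "g j = number n (u j)" using ij by (auto simp: g_def)
      show ?thesis unfolding split map_append list.map concat_append concat.simps g1 g2 g3 gi gj
        unfolding encode_def by simp
    qed
    have hx: "hamming x (encode n k i j (u i, u j)) = k - 2"
    proof -
      have "hamming x (encode n k i j (u i, u j)) = (\<Sum>l\<leftarrow>[1..<k+1]. hamming (number n (u l)) (g l))"
        unfolding x_def enc by (rule ham_concat) (auto simp: lenu g_def zeros_def)
      also have "\<dots> = (\<Sum>l\<leftarrow>[1..<k+1]. if l = i \<or> l = j then 0 else 1)"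
        by (rule arg_cong[where f=sum_list], rule map_cong) (auto simp: g_def ham_self hu0)
      also have "\<dots> = (i - 1) + (j - i - 1) + (k - j)"
      proof -
        have a: "map (\<lambda>l. if l = i \<or> l = j then 0 else 1::nat) [1..<i] = replicate (i - 1) 1"
          using ij by (subst map_cong[OF refl, of _ _ "\<lambda>_. 1"]) (auto simp: map_replicate_const)
        have b: "map (\<lambda>l. if l = i \<or> l = j then 0 else 1::nat) [i+1..<j] = replicate (j - i - 1) 1"
          using ij by (subst map_cong[OF refl, of _ _ "\<lambda>_. 1"]) (auto simp: map_replicate_const)
        have c: "map (\<lambda>l. if l = i \<or> l = j then 0 else 1::nat) [j+1..<k+1] = replicate (k - j) 1"
          using ij by (subst map_cong[OF refl, of _ _ "\<lambda>_. 1"]) (auto simp: map_replicate_const)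
        show ?thesis unfolding split map_append list.map sum_list_append sum_list.Cons a b c
          using ij by (simp add: sum_list_replicate)
      qed
      also have "\<dots> = k - 2" using ij by simp
      finally show ?thesis .
    qed
    have enclen: "length (encode n k i j (u i, u j)) = k * n"
    proof -
      have "length (concat (map g [1..<k+1])) = sum_list (map (\<lambda>l. n) [1..<k+1])"
        unfolding length_concat map_map
        by (rule arg_cong[where f=sum_list], rule map_cong) (auto simp: lenu g_def zeros_def)
      then show ?thesis unfolding enc by (simp add: map_replicate_const sum_list_replicate)
    qed
    have btlen: "length (back_tag n k ip) = N * b"
      using arg_cong[OF ztag, of length] unfolding bt by (simp add: zeros_def)
    have sijdef: "sij = front_tag n k @ encode n k i j (u i, u j) @ back_tag n k ip"
      unfolding sij_def block_def ip_def ..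
    have sijlen: "length sij = Lpar n k"
      unfolding sijdef Lpar_def using ftlen enclen btlen by (simp add: N_def b_def algebra_simps)
    have "hamming s sij = hamming x (encode n k i j (u i, u j)) + hamming (zeros (N * b)) (back_tag n k ip)"
      unfolding s_def sijdef using xlen enclen btlen by (simp add: ham_app ham_self zeros_def)
    also have "\<dots> = (k - 2) + b" using hx hb by simp
    also have "\<dots> = dpar n k"
    proof -
      have "3 * k \<le> n * k" using kn assms(1) mult_le_mono1[of 3 n k] by simp
      moreover have "\<And>m::nat. 3 * k \<le> m \<Longrightarrow> k - 2 + (m - 2 * k + 2) = m - k" using assms(1) by arith
      ultimately show ?thesis unfolding b_def bpar_def dpar_def by blast
    qed
    finally show ?thesis using sub sijlen by auto
  qed
  show ?thesis using slen templ choice by blast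
qed


end
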